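(* Let $\mathcal{C}$ be as in the context, $\mathcal{Q}$ a prime ideal of $\mathcal{C}$, $h\in\mathcal{C}\smallsetminus\mathcal{Q}$ and $g\in\hat{\mathcal{D}}_n(\mathcal{C}[h^{-1}])\langle z\rangle$. Then there exists $H\in\mathcal{C}\smallsetminus\mathcal{Q}$ such that for every $\mathcal{P}\in V(\mathcal{Q})\smallsetminus V(H)$, $(g)_\mathcal{P}$ is defined and $\mathrm{New}((g)_\mathcal{P})=\mathrm{New}((g)_\mathcal{Q})$.
   Context: $x=(x_1,\ldots,x_n)$. For a commutative ring $A$, $\hat{\mathcal{D}}_n(A)\langle z\rangle$ is the $A[[x]]$-algebra generated by $\partial_{x_1},\ldots,\partial_{x_n}$ and a central variable $z$, with commuting $\partial_{x_i}$ and $[\partial_{x_i},a]=\frac{\partial a}{\partial x_i}z$ for $a\in A[[x]]$; elements are uniquely $P=\sum c_{\alpha\beta k}x^\alpha\partial_x^\beta z^k$ and $\mathrm{Supp}(P)=\{(\alpha,\beta,k)\in\mathbb{N}^{2n+1}:c_{\alpha\beta k}\neq0\}$. $\mathcal{C}$: commutative integral domain with $1$ (not necessarily noetherian) such that no nonzero integer lies in a prime ideal; $\mathcal{F}=\mathrm{Frac}(\mathcal{C})$; $\mathcal{C}[h^{-1}]\subset\mathcal{F}$ is the localization and $\hat{\mathcal{D}}_n(\mathcal{C}[h^{-1}])\langle z\rangle\subset\hat{\mathcal{D}}_n(\mathcal{F})\langle z\rangle$. For a prime $\mathcal{P}$, $\mathcal{F}(\mathcal{P})=\mathrm{Frac}(\mathcal{C}/\mathcal{P})$,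 and for $P$ with coefficients in the localization $\mathcal{C}_\mathcal{P}$, $(P)_\mathcal{P}\in\hat{\mathcal{D}}_n(\mathcal{F}(\mathcal{P}))\langle z\rangle$ is obtained by mapping each coefficient to $\mathcal{F}(\mathcal{P})$. $V(\mathcal{I})=\{\mathcal{P}\in\mathrm{Spec}(\mathcal{C}):\mathcal{I}\subset\mathcal{P}\}$, $V(H)=V(H\mathcal{C})$. $\mathcal{W}=\{(u,v)\in\mathbb{Z}^{2n}:u_i\le0,\ u_i+v_i\ge0\ \forall i\}$. For an element $g$ of $\hat{\mathcal{D}}_n(K)\langle z\rangle$ ($K$ a field), its Newton polyhedron is the convex hull in $\mathbb{R}^{2n+1}$ $\mathrm{New}(g)=\mathrm{conv}\big(\mathrm{Supp}(g)+\{(\alpha,\beta,0)\in\mathbb{Z}^{2n+1}:(u,v)\cdot(\alpha,\beta)\le0\ \forall(u,v)\in\mathcal{W}\}\big)$. *)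

theory Defs
  imports "HOL-Analysis.Analysis" "HOL-Computational_Algebra.Fraction_Field"
begin

definition is_ideal :: "'a::comm_ring_1 set \<Rightarrow> bool" where
  "is_ideal I \<longleftrightarrow> 0 \<in> I \<and> (\<forall>a\<in>I. \<forall>b\<in>I. a + b \<in> I) \<and> (\<forall>a\<in>I. - a \<in> I)
      \<and> (\<forall>a\<in>I. \<forall>r. r * a \<in> I)"

definition prime_ideal :: "'a::comm_ring_1 set \<Rightarrow> bool" where
  "prime_ideal P \<longleftrightarrow> is_ideal P \<and> 1 \<notin> P \<and> (\<forall>a b. a * b \<in> P \<longrightarrow> a \<in> P \<or> b \<in> P)"

text \<open>The fraction field F = Frac(C) is \<open>'c fract\<close>; C is embedded via \<open>Fract a 1\<close>.\<close>

definition loc_elem :: "'c::idom \<Rightarrow> 'c fract set" where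
  "loc_elem h = {Fract a (h ^ m) | a m. True}"

definition loc_prime :: "'c::idom set \<Rightarrow> 'c fract set" where
  "loc_prime P = {Fract a s | a s. s \<notin> P}"

text \<open>The kernel P C_P of the reduction map C_P \<rightarrow> F(P) = Frac(C/P).\<close>
definition loc_max :: "'c::idom set \<Rightarrow> 'c fract set" where
  "loc_max P = {Fract a s | a s. a \<in> P \<and> s \<notin> P}"

text \<open>An element of D_n(A)<z> given by its (unique) coefficient family
  c \<alpha> \<beta> k (coefficient of x^\<alpha> \<partial>^\<beta> z^k): coefficients in A, and
  polynomial in \<partial>, z (only finitely many (\<beta>,k) occur).\<close>
definition dhat_elem :: "'a::zero set \<Rightarrow> (('n \<Rightarrow> nat) \<Rightarrow> ('n \<Rightarrow> nat) \<Rightarrow> nat \<Rightarrow> 'a) \<Rightarrow> bool" where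
  "dhat_elem A c \<longleftrightarrow> (\<forall>\<alpha> \<beta> k. c \<alpha> \<beta> k \<in> A) \<and> finite {(\<beta>, k). \<exists>\<alpha>. c \<alpha> \<beta> k \<noteq> 0}"

definition red_defined :: "'c::idom set \<Rightarrow> (('n \<Rightarrow> nat) \<Rightarrow> ('n \<Rightarrow> nat) \<Rightarrow> nat \<Rightarrow> 'c fract) \<Rightarrow> bool" where
  "red_defined P c \<longleftrightarrow> (\<forall>\<alpha> \<beta> k. c \<alpha> \<beta> k \<in> loc_prime P)"

definition supp_red :: "'c::idom set \<Rightarrow> (('n \<Rightarrow> nat) \<Rightarrow> ('n \<Rightarrow> nat) \<Rightarrow> nat \<Rightarrow> 'c fract)
    \<Rightarrow> (('n \<Rightarrow> nat) \<times> ('n \<Rightarrow> nat) \<times> nat) set" where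
  "supp_red P c = {(\<alpha>, \<beta>, k). c \<alpha> \<beta> k \<in> loc_prime P \<and> c \<alpha> \<beta> k \<notin> loc_max P}"

definition W_set :: "(('n::finite \<Rightarrow> int) \<times> ('n \<Rightarrow> int)) set" where
  "W_set = {(u, v). \<forall>i. u i \<le> 0 \<and> u i + v i \<ge> 0}"

definition newton_cone :: "(('n::finite \<Rightarrow> int) \<times> ('n \<Rightarrow> int) \<times> int) set" where
  "newton_cone = {(a, b, k). k = 0 \<and> (\<forall>(u, v)\<in>W_set. (\<Sum>i\<in>UNIV. u i * a i + v i * b i) \<le> 0)}"

definition lattice_pt :: "('n::finite \<Rightarrow> int) \<times> ('n \<Rightarrow> int) \<times> int \<Rightarrow> (real^'n) \<times> (real^'n) \<times> real" where
  "lattice_pt p = (case p of (a, b, k) \<Rightarrow>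
      ((\<chi> i. real_of_int (a i)), (\<chi> i. real_of_int (b i)), real_of_int k))"

definition newton :: "(('n::finite \<Rightarrow> nat) \<times> ('n \<Rightarrow> nat) \<times> nat) set \<Rightarrow> ((real^'n) \<times> (real^'n) \<times> real) set" where
  "newton S = convex hull (lattice_pt `
     {(\<lambda>i. int (\<alpha> i) + a i, \<lambda>i. int (\<beta> i) + b i, int k + m) | \<alpha> \<beta> k a b m.
        (\<alpha>, \<beta>, k) \<in> S \<and> (a, b, m) \<in> newton_cone})"

end

theory Submission
  imports Defs
begin

lemma dickson:
  fixes f :: "'x \<Rightarrow> ('n \<Rightarrow> nat)" and key :: "'x \<Rightarrow> 'k"
  assumes "finite I"
  shows "finite (key ` S) \<Longrightarrow> \<exists>S0\<subseteq>S. finite S0 \<and>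
     (\<forall>x\<in>S. \<exists>y\<in>S0. key y = key x \<and> (\<forall>i\<in>I. f y i \<le> f x i))"
  using assms
proof (induction I arbitrary: S rule: finite_induct)
  case empty
  define r where "r = (\<lambda>k. SOME x. x\<in>S \<and> key x = k)"
  have r: "r (key x) \<in> S \<and> key (r (key x)) = key x" if "x \<in> S" for x
    unfolding r_def by (rule someI[of _ x]) (simp add: that)
  define S0 where "S0 = r ` key ` S"
  have "S0 \<subseteq> S" unfolding S0_def using r by blast
  moreover have "finite S0" unfolding S0_def using empty by simp
  moreover have "\<forall>x\<in>S. \<exists>y\<in>S0. key y = key x"
    unfolding S0_def using r by blast
  ultimately show ?case by auto
next
  case (insert j I)
  obtain S0 where S0: "S0 \<subseteq> S" "finite S0"
    "\<forall>x\<in>S. \<exists>y\<in>S0. key y = key x \<and> (\<forall>i\<in>I. f y i \<le> f x i)"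
    using insert.IH[of S] insert.prems by blast
  have "\<forall>v. \<exists>T. T \<subseteq> {x\<in>S. f x j = v} \<and> finite T \<and>
     (\<forall>x\<in>{x\<in>S. f x j = v}. \<exists>y\<in>T. key y = key x \<and> (\<forall>i\<in>I. f y i \<le> f x i))"
  proof
    fix v
    have "finite (key ` {x\<in>S. f x j = v})"
      by (rule finite_subset[OF _ insert.prems(1)]) auto
    then show "\<exists>T. T \<subseteq> {x\<in>S. f x j = v} \<and> finite T \<and>
     (\<forall>x\<in>{x\<in>S. f x j = v}. \<exists>y\<in>T. key y = key x \<and> (\<forall>i\<in>I. f y i \<le> f x i))"
      using insert.IH[of "{x\<in>S. f x j = v}"] by blast
  qed
  then obtain T where T0: "\<forall>v. T v \<subseteq> {x\<in>S. f x j = v} \<and> finite (T v) \<and>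
     (\<forall>x\<in>{x\<in>S. f x j = v}. \<exists>y\<in>T v. key y = key x \<and> (\<forall>i\<in>I. f y i \<le> f x i))"
    by (rule choice[THEN exE])
  have T1: "\<And>v. T v \<subseteq> {x\<in>S. f x j = v}" and T2: "\<And>v. finite (T v)"
    using T0 by blast+
  have T3: "\<And>x. x \<in> S \<Longrightarrow> \<exists>y\<in>T (f x j). key y = key x \<and> (\<forall>i\<in>I. f y i \<le> f x i)"
    using T0 by blast
  define M where "M = Max (insert 0 ((\<lambda>y. f y j) ` S0))"
  define S1 where "S1 = S0 \<union> (\<Union>v\<in>{..M}. T v)"
  have "S1 \<subseteq> S" using S0(1) T1 unfolding S1_def by blast
  moreover have "finite S1" using S0(2) T2 unfolding S1_def by simp
  moreover have "\<forall>x\<in>S. \<exists>y\<in>S1. key y = key x \<and> (\<forall>i\<in>insert j I. f y i \<le> f x i)"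
  proof
    fix x assume x: "x \<in> S"
    then obtain y where y: "y \<in> S0" "key y = key x" "\<forall>i\<in>I. f y i \<le> f x i" using S0(3) by blast
    show "\<exists>y\<in>S1. key y = key x \<and> (\<forall>i\<in>insert j I. f y i \<le> f x i)"
    proof (cases "f y j \<le> f x j")
      case True
      have "y \<in> S1" unfolding S1_def using y(1) by blast
      then show ?thesis using y True by auto
    next
      case False
      have "f y j \<le> M" unfolding M_def using y(1) S0(2) by (intro Max_ge) auto
      with False have le: "f x j \<le> M" by simp
      obtain z where z: "z \<in> T (f x j)" "key z = key x" "\<forall>i\<in>I. f z i \<le> f x i"
        using T3[OF x] by blast
      have "f z j = f x j" using T1 z(1) by blast
      moreover have "z \<in> S1" unfolding S1_def using z(1) le by blast
      ultimately show ?thesis using z by auto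
    qed
  qed
  ultimately show ?case by blast
qed

lemma newton_up:
  fixes S0 S1 :: "(('n::finite \<Rightarrow> nat) \<times> ('n \<Rightarrow> nat) \<times> nat) set"
  assumes "S0 \<subseteq> S1"
    and up: "\<forall>x\<in>S1. \<exists>y\<in>S0. fst (snd y) = fst (snd x) \<and> snd (snd y) = snd (snd x)
               \<and> (\<forall>i. fst y i \<le> fst x i)"
  shows "newton S1 = newton S0"
proof -
  let ?B = "\<lambda>S. {(\<lambda>i. int (\<alpha> i) + a i, \<lambda>i. int (\<beta> i) + b i, int k + m) | \<alpha> \<beta> k a b m.
        (\<alpha>, \<beta>, k) \<in> S \<and> (a, b, m) \<in> (newton_cone :: (('n \<Rightarrow> int) \<times> ('n \<Rightarrow> int) \<times> int) set)}"
  have "?B S1 \<subseteq> ?B S0"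
  proof
    fix p assume "p \<in> ?B S1"
    then obtain \<alpha> \<beta> k a b m where p: "p = (\<lambda>i. int (\<alpha> i) + a i, \<lambda>i. int (\<beta> i) + b i, int k + m)"
      and s: "(\<alpha>, \<beta>, k) \<in> S1" and c: "(a, b, m) \<in> newton_cone" by blast
    obtain \<alpha>0 where y: "(\<alpha>0, \<beta>, k) \<in> S0" "\<forall>i. \<alpha>0 i \<le> \<alpha> i"
      using up s by fastforce
    define a' where "a' = (\<lambda>i. int (\<alpha> i) - int (\<alpha>0 i) + a i)"
    have "(a', b, m) \<in> newton_cone"
      unfolding newton_cone_def
    proof (safe)
      show "m = 0" using c unfolding newton_cone_def by auto
    next
      fix u v :: "'n \<Rightarrow> int" assume uv: "(u, v) \<in> W_set"
      have "(\<Sum>i\<in>UNIV. u i * a' i + v i * b i) =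
            (\<Sum>i\<in>UNIV. u i * (int (\<alpha> i) - int (\<alpha>0 i))) + (\<Sum>i\<in>UNIV. u i * a i + v i * b i)"
        unfolding a'_def by (simp add: sum.distrib[symmetric] algebra_simps)
      also have "(\<Sum>i\<in>UNIV. u i * (int (\<alpha> i) - int (\<alpha>0 i))) \<le> 0"
      proof (rule sum_nonpos)
        fix i
        have "u i \<le> 0" using uv unfolding W_set_def by auto
        moreover have "int (\<alpha> i) - int (\<alpha>0 i) \<ge> 0" using y(2) by simp
        ultimately show "u i * (int (\<alpha> i) - int (\<alpha>0 i)) \<le> 0" by (simp add: mult_nonpos_nonneg)
      qed
      moreover have "(\<Sum>i\<in>UNIV. u i * a i + v i * b i) \<le> 0"
        using c uv unfolding newton_cone_def by auto
      ultimately show "(\<Sum>i\<in>UNIV. u i * a' i + v i * b i) \<le> 0" by linarith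
    qed
    moreover have "p = (\<lambda>i. int (\<alpha>0 i) + a' i, \<lambda>i. int (\<beta> i) + b i, int k + m)"
      unfolding p a'_def by auto
    ultimately show "p \<in> ?B S0" using y(1) by blast
  qed
  moreover have "?B S0 \<subseteq> ?B S1" using assms(1) by blast
  ultimately have "?B S1 = ?B S0" by blast
  then show ?thesis unfolding newton_def by simp
qed


lemma pi_zero: "prime_ideal P \<Longrightarrow> 0 \<in> P"
  unfolding prime_ideal_def is_ideal_def by auto

lemma pi_mult: "prime_ideal P \<Longrightarrow> a \<in> P \<Longrightarrow> r * a \<in> P"
  unfolding prime_ideal_def is_ideal_def by auto

lemma pi_prime: "prime_ideal P \<Longrightarrow> a * b \<in> P \<Longrightarrow> a \<in> P \<or> b \<in> P"
  unfolding prime_ideal_def by auto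

lemma pi_one: "prime_ideal P \<Longrightarrow> 1 \<notin> P"
  unfolding prime_ideal_def by auto

lemma pow_notin: "prime_ideal P \<Longrightarrow> h \<notin> P \<Longrightarrow> h ^ m \<notin> P"
  by (induction m) (auto dest: pi_prime pi_one)

lemma prod_notin:
  assumes "prime_ideal P" "finite S" "\<forall>s\<in>S. f s \<notin> P" shows "prod f S \<notin> P"
  using assms(2,3) by (induction S rule: finite_induct) (auto dest: pi_prime[OF assms(1)] simp: pi_one[OF assms(1)])

lemma key_red:
  fixes P :: "'c::idom set"
  assumes P: "prime_ideal P" and h: "h \<notin> P" and c: "c = Fract a (h ^ m)"
  shows "c \<in> loc_prime P \<and> (c \<in> loc_max P \<longleftrightarrow> a \<in> P)"
proof -
  have hm: "h ^ m \<notin> P" using pow_notin[OF P h] .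
  have h0: "h \<noteq> 0" using h pi_zero[OF P] by auto
  then have hm0: "h ^ m \<noteq> 0" by simp
  have "c \<in> loc_prime P" unfolding loc_prime_def using c hm by blast
  moreover have "c \<in> loc_max P \<longleftrightarrow> a \<in> P"
  proof
    assume "a \<in> P" then show "c \<in> loc_max P" unfolding loc_max_def using c hm by blast
  next
    assume "c \<in> loc_max P"
    then obtain a' s' where as: "c = Fract a' s'" "a' \<in> P" "s' \<notin> P" unfolding loc_max_def by blast
    have s0: "s' \<noteq> 0" using as(3) pi_zero[OF P] by auto
    have "a * s' = a' * h ^ m" using as(1) c eq_fract(1)[OF hm0 s0] by simp
    moreover have "a' * h ^ m \<in> P" using pi_mult[OF P as(2), of "h ^ m"] by (simp add: mult.commute)
    ultimately have "a * s' \<in> P" by simp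
    then show "a \<in> P" using pi_prime[OF P] as(3) by blast
  qed
  ultimately show ?thesis by blast
qed

theorem mainTheorem6:
  fixes Q :: "'c::idom set" and h :: 'c
    and g :: "('n::finite \<Rightarrow> nat) \<Rightarrow> ('n \<Rightarrow> nat) \<Rightarrow> nat \<Rightarrow> 'c fract"
  assumes hypC: "\<And>P (m::int). prime_ideal P \<Longrightarrow> m \<noteq> 0 \<Longrightarrow> (of_int m :: 'c) \<notin> P"
    and Q: "prime_ideal Q"
    and h: "h \<notin> Q"
    and g: "dhat_elem (loc_elem h) g"
  shows "\<exists>H. H \<notin> Q \<and>
           (\<forall>P. prime_ideal P \<and> Q \<subseteq> P \<and> H \<notin> P \<longrightarrow>
              red_defined P g \<and> newton (supp_red P g) = newton (supp_red Q g))"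
proof -
  define A where "A = (\<lambda>\<alpha> \<beta> k. fst (SOME p. g \<alpha> \<beta> k = Fract (fst p) (h ^ snd p)))"
  define E where "E = (\<lambda>\<alpha> \<beta> k. snd (SOME p. g \<alpha> \<beta> k = Fract (fst p) (h ^ snd p)))"
  have AE: "g \<alpha> \<beta> k = Fract (A \<alpha> \<beta> k) (h ^ E \<alpha> \<beta> k)" for \<alpha> \<beta> k
  proof -
    have "g \<alpha> \<beta> k \<in> loc_elem h" using g unfolding dhat_elem_def by blast
    then obtain a m where "g \<alpha> \<beta> k = Fract a (h ^ m)" unfolding loc_elem_def by blast
    then have "\<exists>p. g \<alpha> \<beta> k = Fract (fst p) (h ^ snd p)" by (intro exI[of _ "(a, m)"]) simp
    from someI_ex[OF this] show ?thesis unfolding A_def E_def by simp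
  qed
  have mem: "(\<alpha>, \<beta>, k) \<in> supp_red P g \<longleftrightarrow> A \<alpha> \<beta> k \<notin> P"
    if "prime_ideal P" "h \<notin> P" for P \<alpha> \<beta> k
  proof -
    have "g \<alpha> \<beta> k \<in> loc_prime P \<and> (g \<alpha> \<beta> k \<in> loc_max P \<longleftrightarrow> A \<alpha> \<beta> k \<in> P)"
      by (rule key_red[OF that AE])
    then show ?thesis unfolding supp_red_def by simp
  qed
  have def: "red_defined P g" if "prime_ideal P" "h \<notin> P" for P
    unfolding red_defined_def using key_red[OF that AE] by simp
  let ?SQ = "supp_red Q g"
  have z: "(0::'c fract) \<in> loc_max Q"
  proof -
    have "(0::'c fract) = Fract 0 1" by (simp add: Zero_fract_def)
    then show ?thesis unfolding loc_max_def using pi_zero[OF Q] pi_one[OF Q] by blast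
  qed
  have "snd ` ?SQ \<subseteq> {(\<beta>, k). \<exists>\<alpha>. g \<alpha> \<beta> k \<noteq> 0}"
  proof
    fix p assume "p \<in> snd ` ?SQ"
    then obtain \<alpha> \<beta> k where p: "p = (\<beta>, k)" "(\<alpha>, \<beta>, k) \<in> ?SQ" by auto
    then have "g \<alpha> \<beta> k \<noteq> 0" unfolding supp_red_def using z by auto
    then show "p \<in> {(\<beta>, k). \<exists>\<alpha>. g \<alpha> \<beta> k \<noteq> 0}" using p(1) by blast
  qed
  then have fin: "finite (snd ` ?SQ)" using g unfolding dhat_elem_def by (meson finite_subset)
  obtain S0 where S0: "S0 \<subseteq> ?SQ" "finite S0"
    "\<forall>x\<in>?SQ. \<exists>y\<in>S0. snd y = snd x \<and> (\<forall>i\<in>UNIV. fst y i \<le> fst x i)"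
    using dickson[of UNIV snd ?SQ fst, OF finite_class.finite_UNIV fin] by blast
  define H where "H = h * prod (\<lambda>x. A (fst x) (fst (snd x)) (snd (snd x))) S0"
  have S0A: "\<And>P. prime_ideal P \<Longrightarrow> H \<notin> P \<Longrightarrow> \<forall>x\<in>S0. A (fst x) (fst (snd x)) (snd (snd x)) \<notin> P"
  proof -
    fix P :: "'c set" assume P: "prime_ideal P" "H \<notin> P"
    show "\<forall>x\<in>S0. A (fst x) (fst (snd x)) (snd (snd x)) \<notin> P"
    proof
      fix x assume x: "x \<in> S0"
      have "prod (\<lambda>x. A (fst x) (fst (snd x)) (snd (snd x))) S0 =
         A (fst x) (fst (snd x)) (snd (snd x)) * prod (\<lambda>x. A (fst x) (fst (snd x)) (snd (snd x))) (S0 - {x})"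
        using x S0(2) by (simp add: prod.remove)
      show "A (fst x) (fst (snd x)) (snd (snd x)) \<notin> P"
      proof
        assume a: "A (fst x) (fst (snd x)) (snd (snd x)) \<in> P"
        have "H = (h * prod (\<lambda>x. A (fst x) (fst (snd x)) (snd (snd x))) (S0 - {x})) * A (fst x) (fst (snd x)) (snd (snd x))"
          unfolding H_def using \<open>prod _ S0 = _\<close> by (simp add: ac_simps)
        then have "H \<in> P" using pi_mult[OF P(1) a] by simp
        then show False using P(2) by simp
      qed
    qed
  qed
  have HQ: "H \<notin> Q"
  proof -
    have "\<forall>x\<in>S0. A (fst x) (fst (snd x)) (snd (snd x)) \<notin> Q"
    proof
      fix x assume x: "x \<in> S0"
      obtain \<alpha> \<beta> k where xe: "x = (\<alpha>, \<beta>, k)" by (cases x) blast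
      have "x \<in> ?SQ" using x S0(1) by blast
      then show "A (fst x) (fst (snd x)) (snd (snd x)) \<notin> Q" using xe mem[OF Q h] by simp
    qed
    then have "prod (\<lambda>x. A (fst x) (fst (snd x)) (snd (snd x))) S0 \<notin> Q"
      by (rule prod_notin[OF Q S0(2)])
    then show ?thesis unfolding H_def using h pi_prime[OF Q] by blast
  qed
  have main: "red_defined P g \<and> newton (supp_red P g) = newton (supp_red Q g)"
    if P: "prime_ideal P" "Q \<subseteq> P" "H \<notin> P" for P
  proof -
    have hP: "h \<notin> P"
    proof
      assume "h \<in> P"
      then have "prod (\<lambda>x. A (fst x) (fst (snd x)) (snd (snd x))) S0 * h \<in> P" by (rule pi_mult[OF P(1)])
      then show False using P(3) unfolding H_def by (simp add: mult.commute)
    qed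
    have sub: "supp_red P g \<subseteq> ?SQ"
    proof
      fix x assume x: "x \<in> supp_red P g"
      obtain \<alpha> \<beta> k where xe: "x = (\<alpha>, \<beta>, k)" by (cases x) blast
      have "A \<alpha> \<beta> k \<notin> P" using x xe mem[OF P(1) hP] by simp
      then have "A \<alpha> \<beta> k \<notin> Q" using P(2) by blast
      then show "x \<in> ?SQ" using xe mem[OF Q h] by simp
    qed
    have sub0: "S0 \<subseteq> supp_red P g"
    proof
      fix x assume x: "x \<in> S0"
      obtain \<alpha> \<beta> k where xe: "x = (\<alpha>, \<beta>, k)" by (cases x) blast
      have "A (fst x) (fst (snd x)) (snd (snd x)) \<notin> P" using S0A[OF P(1) P(3)] x by blast
      then have "A \<alpha> \<beta> k \<notin> P" using xe by simp
      then show "x \<in> supp_red P g" using xe mem[OF P(1) hP] by simp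
    qed
    have up: "\<forall>x\<in>T. \<exists>y\<in>S0. fst (snd y) = fst (snd x) \<and> snd (snd y) = snd (snd x)
               \<and> (\<forall>i. fst y i \<le> fst x i)" if "T \<subseteq> ?SQ" for T
    proof
      fix x assume "x \<in> T"
      then have "x \<in> ?SQ" by (rule subsetD[OF that])
      then have "\<exists>y\<in>S0. snd y = snd x \<and> (\<forall>i\<in>UNIV. fst y i \<le> fst x i)" by (rule bspec[OF S0(3)])
      then obtain y where y: "y \<in> S0" "snd y = snd x" "\<forall>i\<in>UNIV. fst y i \<le> fst x i"
        by (elim bexE conjE)
      have yy: "fst (snd y) = fst (snd x) \<and> snd (snd y) = snd (snd x) \<and> (\<forall>i. fst y i \<le> fst x i)"
        using y(2,3) by simp
      show "\<exists>y\<in>S0. fst (snd y) = fst (snd x) \<and> snd (snd y) = snd (snd x) \<and> (\<forall>i. fst y i \<le> fst x i)"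
        by (rule bexI[where x=y], rule yy, rule y(1))
    qed
    have "newton (supp_red P g) = newton S0" by (rule newton_up[OF sub0 up[OF sub]])
    moreover have "newton ?SQ = newton S0" by (rule newton_up[OF S0(1) up]) simp
    ultimately show ?thesis using def[OF P(1) hP] by simp
  qed
  show ?thesis
  proof (rule exI[of _ H], rule conjI[OF HQ], intro allI impI)
    fix P assume "prime_ideal P \<and> Q \<subseteq> P \<and> H \<notin> P"
    then show "red_defined P g \<and> newton (supp_red P g) = newton (supp_red Q g)"
      using main by blast
  qed
qed

end
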